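(* Let $\mathcal{X}\subseteq\mathbb{R}^d$ be closed and convex, $p\ge2$, $\sigma>0$, and let $h:\mathcal{X}\to\mathbb{R}$ be convex, continuously differentiable and satisfy $D_h(x,y)\ge\frac{\sigma}{p}\|x-y\|^p$ for all $x,y\in\mathcal{X}$. Let $f:\mathcal{X}\to\mathbb{R}$ be convex and differentiable with minimizer $x^\ast$. Let $\delta>0$ and let $(A_k)_{k\ge0}$ be a nondecreasing sequence of positive numbers; set $\alpha_k=A_{k+1}-A_k$ and $\tau_k=\alpha_k/A_{k+1}$. Define $E_k=D_h(x^\ast,z_k)+A_k\big(f(y_k)-f(x^\ast)\big)$. (a) If sequences $(x_k),(y_k),(z_k)$ in $\mathcal{X}$ satisfy, for every $k$, $x_{k+1}=\tau_k z_k+(1-\tau_k)y_k$ and $\nabla h(z_{k+1})=\nabla h(z_k)-\alpha_k\nabla f(x_{k+1})$ (with $y_{k+1}\in\mathcal{X}$ arbitrary), then $$\frac{E_{k+1}-E_k}{\delta}\le\frac{p-1}{p}\sigma^{-\frac1{p-1}}\frac{(A_{k+1}-A_k)^{\frac p{p-1}}}{\delta}\|\nabla f(x_{k+1})\|^{\frac p{p-1}}+\frac{A_{k+1}}{\delta}\big(f(y_{k+1})-f(x_{k+1})\big).$$ (b) If instead they satisfy $x_{k+1}=\tau_k z_k+(1-\tau_k)y_k$ and $\nabla h(z_{k+1})=\nabla h(z_k)-\alpha_k\nabla f(y_{k+1})$ (with $y_{k+1}\in\mathcal{X}$ arbitrary), then $$\frac{E_{k+1}-E_k}{\delta}\le\frac{p-1}{p}\sigma^{-\frac1{p-1}}\frac{(A_{k+1}-A_k)^{\frac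 p{p-1}}}{\delta}\|\nabla f(y_{k+1})\|^{\frac p{p-1}}+\frac{A_{k+1}}{\delta}\langle\nabla f(y_{k+1}),y_{k+1}-x_{k+1}\rangle.$$
   Context: $\|\cdot\|$ is the Euclidean norm and $D_h(y,x)=h(y)-h(x)-\langle\nabla h(x),y-x\rangle$ is the Bregman divergence of $h$. *)

theory Defs
  imports "HOL-Analysis.Analysis"
begin

definition bregman :: "('a::real_inner \<Rightarrow> real) \<Rightarrow> ('a \<Rightarrow> 'a) \<Rightarrow> 'a \<Rightarrow> 'a \<Rightarrow> real" where
  "bregman h gh y x = h y - h x - inner (gh x) (y - x)"

end

theory Submission imports Defs begin

lemma grad_ineq:
  fixes f :: "'a::real_inner \<Rightarrow> real"
  assumes cX: "convex X" and cf: "convex_on X f" and xX: "x \<in> X" and yX: "y \<in> X"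
    and der: "(f has_derivative (\<lambda>v. inner g v)) (at x within X)"
  shows "inner g (y - x) \<le> f y - f x"
proof -
  define d where "d = y - x"
  define \<gamma> where "\<gamma> = (\<lambda>t::real. x + t *\<^sub>R d)"
  have \<gamma>X: "\<gamma> ` {0..1} \<subseteq> X"
  proof
    fix w assume "w \<in> \<gamma> ` {0..1}"
    then obtain t where t: "0 \<le> t" "t \<le> 1" "w = \<gamma> t" by auto
    have "w = (1 - t) *\<^sub>R x + t *\<^sub>R y" using t by (simp add: \<gamma>_def d_def algebra_simps)
    then show "w \<in> X" using cX xX yX t by (simp add: convex_alt)
  qed
  have d\<gamma>: "(\<gamma> has_derivative (\<lambda>t. t *\<^sub>R d)) (at 0 within {0..1})"
    unfolding \<gamma>_def by (auto intro!: derivative_eq_intros)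
  have \<gamma>0: "\<gamma> 0 = x" by (simp add: \<gamma>_def)
  have "(f has_derivative (\<lambda>v. inner g v)) (at (\<gamma> 0) within \<gamma> ` {0..1})"
    using has_derivative_subset[OF der \<gamma>X] \<gamma>0 by simp
  from has_derivative_in_compose[OF d\<gamma> this]
  have "((f \<circ> \<gamma>) has_derivative (\<lambda>t. inner g (t *\<^sub>R d))) (at 0 within {0..1})"
    by (simp add: o_def)
  moreover have "(\<lambda>t. inner g (t *\<^sub>R d)) = (*) (inner g d)" by (auto simp: mult.commute)
  ultimately have "((f \<circ> \<gamma>) has_field_derivative inner g d) (at 0 within {0..1})"
    unfolding has_field_derivative_def by simp
  hence lim: "((\<lambda>t. ((f \<circ> \<gamma>) t - (f \<circ> \<gamma>) 0) / (t - 0)) \<longlongrightarrow> inner g d) (at 0 within {0..1})"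
    using has_field_derivative_iff by blast
  have ev: "eventually (\<lambda>t. ((f \<circ> \<gamma>) t - (f \<circ> \<gamma>) 0) / (t - 0) \<le> f y - f x) (at 0 within {0..1})"
    unfolding eventually_at_filter
  proof (rule always_eventually, intro allI impI)
    fix t :: real assume t: "t \<noteq> 0" "t \<in> {0..1}"
    hence tp: "t > 0" by auto
    have "\<gamma> t = (1 - t) *\<^sub>R x + t *\<^sub>R y" by (simp add: \<gamma>_def d_def algebra_simps)
    hence "f (\<gamma> t) \<le> (1 - t) * f x + t * f y"
      using convex_onD[OF cf, of t x y] t xX yX by simp
    hence "f (\<gamma> t) - f x \<le> t * (f y - f x)" by (simp add: algebra_simps)
    thus "((f \<circ> \<gamma>) t - (f \<circ> \<gamma>) 0) / (t - 0) \<le> f y - f x"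
      using tp \<gamma>0 by (simp add: divide_le_eq mult.commute)
  qed
  have nb: "at (0::real) within {0..1} \<noteq> bot" by (simp add: at_within_Icc_at_right)
  from tendsto_le[OF nb tendsto_const lim ev] show ?thesis by (simp add: d_def)
qed

lemma young:
  fixes p \<sigma> a t :: real
  assumes p: "p \<ge> 2" and s: "\<sigma> > 0" and a: "a \<ge> 0" and t: "t \<ge> 0"
  shows "a * t - \<sigma> / p * t powr p \<le> (p-1)/p * \<sigma> powr (-1/(p-1)) * a powr (p/(p-1))"
proof -
  define q where "q = p/(p-1)"
  have q1: "q > 1" using p by (simp add: q_def)
  have pq: "1/p + 1/q = 1" using p by (simp add: q_def field_simps)
  define u where "u = \<sigma> powr (1/p) * t"
  define v where "v = \<sigma> powr (-1/p) * a"
  have uv: "u * v = a * t" using s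
    by (simp add: u_def v_def powr_minus field_simps)
  have up: "u powr p = \<sigma> * t powr p" using s t p
    by (simp add: u_def powr_mult powr_powr)
  have vq: "v powr q = \<sigma> powr (-1/(p-1)) * a powr q" using s a p
    by (simp add: v_def powr_mult powr_powr q_def)
  have "u * v \<le> u powr p / p + v powr q / q"
    by (rule Youngs_inequality) (use p q1 pq s t a in \<open>auto simp: u_def v_def\<close>)
  moreover have "1/q = (p-1)/p" using p by (simp add: q_def)
  ultimately show ?thesis using uv up vq unfolding q_def by (simp add: field_simps)
qed

lemma breg_step:
  fixes gh g :: "'a::real_inner \<Rightarrow> 'a" and h :: "'a \<Rightarrow> real"
  assumes p: "p \<ge> 2" and s: "\<sigma> > 0" and al: "\<alpha> \<ge> 0"
    and unif: "bregman h gh z' z \<ge> \<sigma> / p * norm (z' - z) powr p"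
    and upd: "gh z' = gh z - \<alpha> *\<^sub>R gv"
  shows "bregman h gh u z' - bregman h gh u z \<le> \<alpha> * inner gv (u - z)
     + (p-1)/p * \<sigma> powr (-1/(p-1)) * \<alpha> powr (p/(p-1)) * norm gv powr (p/(p-1))"
proof -
  have id: "bregman h gh u z' - bregman h gh u z = \<alpha> * inner gv (u - z') - bregman h gh z' z"
    unfolding bregman_def upd by (simp add: inner_diff_left inner_diff_right algebra_simps)
  have "\<alpha> * inner gv (u - z') = \<alpha> * inner gv (u - z) + \<alpha> * inner gv (z - z')"
    by (simp add: inner_diff_right algebra_simps)
  also have "\<alpha> * inner gv (z - z') \<le> (\<alpha> * norm gv) * norm (z' - z)"
    using mult_left_mono[OF norm_cauchy_schwarz[of gv "z - z'"] al]
    by (simp add: norm_minus_commute mult.assoc)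
  finally have "bregman h gh u z' - bregman h gh u z \<le> \<alpha> * inner gv (u - z)
      + ((\<alpha> * norm gv) * norm (z' - z) - \<sigma> / p * norm (z' - z) powr p)"
    using id unif by linarith
  also have "(\<alpha> * norm gv) * norm (z' - z) - \<sigma> / p * norm (z' - z) powr p
     \<le> (p-1)/p * \<sigma> powr (-1/(p-1)) * (\<alpha> * norm gv) powr (p/(p-1))"
    by (rule young) (use p s al in auto)
  also have "(\<alpha> * norm gv) powr (p/(p-1)) = \<alpha> powr (p/(p-1)) * norm gv powr (p/(p-1))"
    using al by (simp add: powr_mult)
  finally show ?thesis by (simp add: mult.assoc)
qed

lemma comb:
  fixes gv x' y z :: "'a::real_inner"
  assumes A: "A > 0" "A' > 0"
    and x': "x' = ((A' - A) / A') *\<^sub>R z + (1 - (A' - A) / A') *\<^sub>R y"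
  shows "(A' - A) * inner gv (u - z) = (A' - A) * inner gv (u - x') + A * inner gv (y - x')"
proof -
  have "A' *\<^sub>R x' = (A' - A) *\<^sub>R z + A *\<^sub>R y"
  proof -
    have c1: "A' * ((A' - A) / A') = A' - A" using A by simp
    have c2: "A' * (1 - (A' - A) / A') = A" using A by (simp add: field_simps)
    show ?thesis unfolding x' scaleR_add_right scaleR_scaleR c1 c2 ..
  qed
  hence "(A' - A) *\<^sub>R z = A' *\<^sub>R x' - A *\<^sub>R y" by (simp add: algebra_simps)
  hence "(A' - A) * inner gv z = A' * inner gv x' - A * inner gv y"
    by (metis inner_diff_right inner_scaleR_right)
  thus ?thesis by (simp add: inner_diff_right algebra_simps)
qed
theorem proposition5:
  fixes X :: "'a::euclidean_space set"
    and h f :: "'a \<Rightarrow> real" and gh gf :: "'a \<Rightarrow> 'a"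
    and p \<sigma> \<delta> :: real and xstar :: 'a and A :: "nat \<Rightarrow> real"
  assumes X: "closed X" "convex X"
    and p: "p \<ge> 2" and \<sigma>: "\<sigma> > 0"
    and h_convex: "convex_on X h"
    and h_grad: "\<And>x. x \<in> X \<Longrightarrow> (h has_derivative (\<lambda>v. inner (gh x) v)) (at x within X)"
    and h_C1: "continuous_on X gh"
    and h_unif: "\<And>x y. x \<in> X \<Longrightarrow> y \<in> X \<Longrightarrow> bregman h gh x y \<ge> \<sigma> / p * norm (x - y) powr p"
    and f_convex: "convex_on X f"
    and f_grad: "\<And>x. x \<in> X \<Longrightarrow> (f has_derivative (\<lambda>v. inner (gf x) v)) (at x within X)"
    and xstar: "xstar \<in> X" "\<And>x. x \<in> X \<Longrightarrow> f xstar \<le> f x"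
    and \<delta>: "\<delta> > 0"
    and A_pos: "\<And>k. A k > 0" and A_mono: "mono A"
  shows
   "(\<forall>x y z :: nat \<Rightarrow> 'a.
       (\<forall>k. x k \<in> X \<and> y k \<in> X \<and> z k \<in> X) \<and>
       (\<forall>k. x (Suc k) = ((A (Suc k) - A k) / A (Suc k)) *\<^sub>R z k
                         + (1 - (A (Suc k) - A k) / A (Suc k)) *\<^sub>R y k) \<and>
       (\<forall>k. gh (z (Suc k)) = gh (z k) - (A (Suc k) - A k) *\<^sub>R gf (x (Suc k)))
     \<longrightarrow> (\<forall>k.
       ((bregman h gh xstar (z (Suc k)) + A (Suc k) * (f (y (Suc k)) - f xstar))
        - (bregman h gh xstar (z k) + A k * (f (y k) - f xstar))) / \<delta>
       \<le> (p - 1) / p * \<sigma> powr (- 1 / (p - 1)) * (A (Suc k) - A k) powr (p / (p - 1)) / \<delta>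
            * norm (gf (x (Suc k))) powr (p / (p - 1))
         + A (Suc k) / \<delta> * (f (y (Suc k)) - f (x (Suc k)))))
    \<and>
   (\<forall>x y z :: nat \<Rightarrow> 'a.
       (\<forall>k. x k \<in> X \<and> y k \<in> X \<and> z k \<in> X) \<and>
       (\<forall>k. x (Suc k) = ((A (Suc k) - A k) / A (Suc k)) *\<^sub>R z k
                         + (1 - (A (Suc k) - A k) / A (Suc k)) *\<^sub>R y k) \<and>
       (\<forall>k. gh (z (Suc k)) = gh (z k) - (A (Suc k) - A k) *\<^sub>R gf (y (Suc k)))
     \<longrightarrow> (\<forall>k.
       ((bregman h gh xstar (z (Suc k)) + A (Suc k) * (f (y (Suc k)) - f xstar))
        - (bregman h gh xstar (z k) + A k * (f (y k) - f xstar))) / \<delta>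
       \<le> (p - 1) / p * \<sigma> powr (- 1 / (p - 1)) * (A (Suc k) - A k) powr (p / (p - 1)) / \<delta>
            * norm (gf (y (Suc k))) powr (p / (p - 1))
         + A (Suc k) / \<delta> * inner (gf (y (Suc k))) (y (Suc k) - x (Suc k))))"
proof -
  let ?C = "(p - 1) / p * \<sigma> powr (- 1 / (p - 1))"
  have al: "A (Suc k) - A k \<ge> 0" for k using A_mono by (simp add: mono_def)
  have fin0: "E' - E \<le> C * a * b + A' * c \<Longrightarrow> (E' - E) / \<delta> \<le> C * a / \<delta> * b + A' / \<delta> * c"
    for E' E C a b A' c :: real
  proof -
    assume "E' - E \<le> C * a * b + A' * c"
    hence "(E' - E) / \<delta> \<le> (C * a * b + A' * c) / \<delta>" using \<delta> by (simp add: divide_right_mono)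
    also have "\<dots> = C * a / \<delta> * b + A' / \<delta> * c" by (simp add: add_divide_distrib)
    finally show ?thesis .
  qed
  have fin: "E' - E \<le> R \<Longrightarrow> (E' - E) / \<delta> \<le> ?C * a / \<delta> * b + A' / \<delta> * c"
    if "R = ?C * a * b + A' * c" for E' E R a b A' c :: real
    using fin0[of E' E ?C a b A' c] that by simp
  show ?thesis
  proof (intro conjI allI impI)
    fix x y z :: "nat \<Rightarrow> 'a" and k
    assume H: "(\<forall>k. x k \<in> X \<and> y k \<in> X \<and> z k \<in> X) \<and>
       (\<forall>k. x (Suc k) = ((A (Suc k) - A k) / A (Suc k)) *\<^sub>R z k
                         + (1 - (A (Suc k) - A k) / A (Suc k)) *\<^sub>R y k) \<and>
       (\<forall>k. gh (z (Suc k)) = gh (z k) - (A (Suc k) - A k) *\<^sub>R gf (x (Suc k)))"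
    let ?g = "gf (x (Suc k))"
    have mem: "x (Suc k) \<in> X" "y k \<in> X" "y (Suc k) \<in> X" "z k \<in> X" "z (Suc k) \<in> X" using H by blast+
    have B: "bregman h gh xstar (z (Suc k)) - bregman h gh xstar (z k) \<le> (A (Suc k) - A k) * inner ?g (xstar - z k)
     + ?C * (A (Suc k) - A k) powr (p/(p-1)) * norm ?g powr (p/(p-1))"
      by (rule breg_step[OF p \<sigma> al h_unif]) (use mem H in auto)
    have Cm: "(A (Suc k) - A k) * inner ?g (xstar - z k) = (A (Suc k) - A k) * inner ?g (xstar - x (Suc k)) + A k * inner ?g (y k - x (Suc k))"
      by (rule comb) (use A_pos H in auto)
    have g1: "inner ?g (xstar - x (Suc k)) \<le> f xstar - f (x (Suc k))"
      by (rule grad_ineq[OF X(2) f_convex]) (use mem f_grad xstar in auto)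
    have g2: "inner ?g (y k - x (Suc k)) \<le> f (y k) - f (x (Suc k))"
      by (rule grad_ineq[OF X(2) f_convex]) (use mem f_grad in auto)
    have "(A (Suc k) - A k) * inner ?g (xstar - x (Suc k)) \<le> (A (Suc k) - A k) * (f xstar - f (x (Suc k)))"
      using mult_left_mono[OF g1 al] .
    moreover have "A k * inner ?g (y k - x (Suc k)) \<le> A k * (f (y k) - f (x (Suc k)))"
      using mult_left_mono[OF g2] A_pos[of k] by simp
    ultimately show "((bregman h gh xstar (z (Suc k)) + A (Suc k) * (f (y (Suc k)) - f xstar))
        - (bregman h gh xstar (z k) + A k * (f (y k) - f xstar))) / \<delta>
       \<le> (p - 1) / p * \<sigma> powr (- 1 / (p - 1)) * (A (Suc k) - A k) powr (p / (p - 1)) / \<delta>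
            * norm (gf (x (Suc k))) powr (p / (p - 1))
         + A (Suc k) / \<delta> * (f (y (Suc k)) - f (x (Suc k)))"
      using B Cm by (intro fin[OF refl]) (simp add: algebra_simps)
  next
    fix x y z :: "nat \<Rightarrow> 'a" and k
    assume H: "(\<forall>k. x k \<in> X \<and> y k \<in> X \<and> z k \<in> X) \<and>
       (\<forall>k. x (Suc k) = ((A (Suc k) - A k) / A (Suc k)) *\<^sub>R z k
                         + (1 - (A (Suc k) - A k) / A (Suc k)) *\<^sub>R y k) \<and>
       (\<forall>k. gh (z (Suc k)) = gh (z k) - (A (Suc k) - A k) *\<^sub>R gf (y (Suc k)))"
    let ?g = "gf (y (Suc k))"
    have mem: "x (Suc k) \<in> X" "y k \<in> X" "y (Suc k) \<in> X" "z k \<in> X" "z (Suc k) \<in> X" using H by blast+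
    have B: "bregman h gh xstar (z (Suc k)) - bregman h gh xstar (z k) \<le> (A (Suc k) - A k) * inner ?g (xstar - z k)
     + ?C * (A (Suc k) - A k) powr (p/(p-1)) * norm ?g powr (p/(p-1))"
      by (rule breg_step[OF p \<sigma> al h_unif]) (use mem H in auto)
    have Cm: "(A (Suc k) - A k) * inner ?g (xstar - z k) = (A (Suc k) - A k) * inner ?g (xstar - x (Suc k)) + A k * inner ?g (y k - x (Suc k))"
      by (rule comb) (use A_pos H in auto)
    have g1: "inner ?g (xstar - y (Suc k)) \<le> f xstar - f (y (Suc k))"
      by (rule grad_ineq[OF X(2) f_convex]) (use mem f_grad xstar in auto)
    have g2: "inner ?g (y k - y (Suc k)) \<le> f (y k) - f (y (Suc k))"
      by (rule grad_ineq[OF X(2) f_convex]) (use mem f_grad in auto)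
    have e1: "inner ?g (xstar - x (Suc k)) = inner ?g (xstar - y (Suc k)) + inner ?g (y (Suc k) - x (Suc k))"
      by (simp add: inner_diff_right)
    have e2: "inner ?g (y k - x (Suc k)) = inner ?g (y k - y (Suc k)) + inner ?g (y (Suc k) - x (Suc k))"
      by (simp add: inner_diff_right)
    have "(A (Suc k) - A k) * inner ?g (xstar - y (Suc k)) \<le> (A (Suc k) - A k) * (f xstar - f (y (Suc k)))"
      using mult_left_mono[OF g1 al] .
    moreover have "A k * inner ?g (y k - y (Suc k)) \<le> A k * (f (y k) - f (y (Suc k)))"
      using mult_left_mono[OF g2] A_pos[of k] by simp
    ultimately show "((bregman h gh xstar (z (Suc k)) + A (Suc k) * (f (y (Suc k)) - f xstar))
        - (bregman h gh xstar (z k) + A k * (f (y k) - f xstar))) / \<delta>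
       \<le> (p - 1) / p * \<sigma> powr (- 1 / (p - 1)) * (A (Suc k) - A k) powr (p / (p - 1)) / \<delta>
            * norm (gf (y (Suc k))) powr (p / (p - 1))
         + A (Suc k) / \<delta> * inner (gf (y (Suc k))) (y (Suc k) - x (Suc k))"
      using B Cm e1 e2 by (intro fin[OF refl]) (simp add: algebra_simps)
  qed
qed

end
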